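(* In the $\mathbf N$-agent system described in the context, let $\{\boldsymbol\mu_t^{\mathbf N},\boldsymbol\nu_t^{\mathbf N}\}_{t\ge0}$ be the empirical joint state and action distributions induced by a policy $\boldsymbol\pi=\{\boldsymbol\pi_t\}_{t\ge0}$. Then for every $t\ge0$, $$\mathbb E\big|\boldsymbol\nu_t^{\mathbf N}-\nu^{\mathrm{MF}}(\boldsymbol\mu_t^{\mathbf N},\boldsymbol\pi_t)\big|_1\le\frac1{N_{\mathrm{pop}}}\Big(\sum_{k\in[K]}\sqrt{N_k}\Big)\sqrt{|\mathcal U|}.$$
   Context: Fix $K\ge1$, $N_1,\dots,N_K\ge1$, $[K]=\{1,\dots,K\}$, $N_{\mathrm{pop}}=\sum_kN_k$, finite sets $\mathcal X,\mathcal U$, $\mathcal P(A)$ the probability distributions on $A$, $|\cdot|_1$ the $L_1$ norm. Agent $j\in[N_k]$ of class $k$ has state $x_{j,k}^t\in\mathcal X$ and action $u_{j,k}^t\in\mathcal U$; $\boldsymbol\mu_t^{\mathbf N}(x,k)=\frac1{N_{\mathrm{pop}}}\sum_{j=1}^{N_k}\mathbf 1(x_{j,k}^t=x)$, $\boldsymbol\nu_t^{\mathbf N}(u,k)=\frac1{N_{\mathrm{pop}}}\sum_{j=1}^{N_k}\mathbf 1(u_{j,k}^t=u)$. For each $k$, $P_k:\mathcal X\times\mathcal U\times\mathcal P(\mathcal X\times[K])\times\mathcal P(\mathcal U\times[K])\to\mathcal P(\mathcal X)$ is a transition law. A policy is $\boldsymbol\pi=\{\boldsymbol\pi_t\}_{t\ge0}$,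 $\boldsymbol\pi_t=(\pi_k^t)_k$, with $\pi_k^t:\mathcal X\times\mathcal P(\mathcal X\times[K])\to\mathcal P(\mathcal U)$. Dynamics: conditioned on all states at time $t$, actions are independent across agents with $u_{j,k}^t\sim\pi_k^t(x_{j,k}^t,\boldsymbol\mu_t^{\mathbf N})$; conditioned on all states and actions at time $t$, next states are independent with $x_{j,k}^{t+1}\sim P_k(x_{j,k}^t,u_{j,k}^t,\boldsymbol\mu_t^{\mathbf N},\boldsymbol\nu_t^{\mathbf N})$. For $\boldsymbol\mu\in\mathcal P(\mathcal X\times[K])$ and decision rules $(\pi_k)_k$: $\nu^{\mathrm{MF}}(\boldsymbol\mu,\boldsymbol\pi)(u,k)=\sum_x\pi_k(x,\boldsymbol\mu)(u)\boldsymbol\mu(x,k)$. *)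

theory Defs
  imports "HOL-Probability.Probability"
begin

(* A joint configuration of states is a function  nat \<times> nat \<Rightarrow> 'x  (values outside the
   agent set are irrelevant); likewise for actions. *)

definition agents :: "nat \<Rightarrow> (nat \<Rightarrow> nat) \<Rightarrow> (nat \<times> nat) set" where
  "agents K N = {(j,k). k \<in> {1..K} \<and> j \<in> {1..N k}}"

definition Npop :: "nat \<Rightarrow> (nat \<Rightarrow> nat) \<Rightarrow> nat" where
  "Npop K N = (\<Sum>k\<in>{1..K}. N k)"

definition emp_state :: "nat \<Rightarrow> (nat \<Rightarrow> nat) \<Rightarrow> (nat \<times> nat \<Rightarrow> 'x) \<Rightarrow> ('x \<times> nat \<Rightarrow> real)" where
  "emp_state K N s = (\<lambda>(x,k). (\<Sum>j\<in>{1..N k}. if s (j,k) = x then 1 else 0) / real (Npop K N))"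

definition emp_action :: "nat \<Rightarrow> (nat \<Rightarrow> nat) \<Rightarrow> (nat \<times> nat \<Rightarrow> 'u) \<Rightarrow> ('u \<times> nat \<Rightarrow> real)" where
  "emp_action K N a = (\<lambda>(u,k). (\<Sum>j\<in>{1..N k}. if a (j,k) = u then 1 else 0) / real (Npop K N))"

definition nu_MF :: "('x::finite \<times> nat \<Rightarrow> real) \<Rightarrow> (nat \<Rightarrow> 'x \<Rightarrow> ('x \<times> nat \<Rightarrow> real) \<Rightarrow> 'u pmf)
                      \<Rightarrow> ('u \<times> nat \<Rightarrow> real)" where
  "nu_MF mu rho = (\<lambda>(u,k). \<Sum>x\<in>UNIV. pmf (rho k x mu) u * mu (x,k))"

definition act_kernel ::
  "nat \<Rightarrow> (nat \<Rightarrow> nat) \<Rightarrow> (nat \<Rightarrow> nat \<Rightarrow> 'x \<Rightarrow> ('x \<times> nat \<Rightarrow> real) \<Rightarrow> 'u pmf)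
   \<Rightarrow> nat \<Rightarrow> (nat \<times> nat \<Rightarrow> 'x) \<Rightarrow> (nat \<times> nat \<Rightarrow> 'u) pmf" where
  "act_kernel K N pol t s =
     Pi_pmf (agents K N) undefined (\<lambda>(j,k). pol t k (s (j,k)) (emp_state K N s))"

definition next_kernel ::
  "nat \<Rightarrow> (nat \<Rightarrow> nat) \<Rightarrow> (nat \<Rightarrow> 'x \<Rightarrow> 'u \<Rightarrow> ('x \<times> nat \<Rightarrow> real) \<Rightarrow> ('u \<times> nat \<Rightarrow> real) \<Rightarrow> 'x pmf)
   \<Rightarrow> (nat \<times> nat \<Rightarrow> 'x) \<Rightarrow> (nat \<times> nat \<Rightarrow> 'u) \<Rightarrow> (nat \<times> nat \<Rightarrow> 'x) pmf" where
  "next_kernel K N P s a =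
     Pi_pmf (agents K N) undefined
       (\<lambda>(j,k). P k (s (j,k)) (a (j,k)) (emp_state K N s) (emp_action K N a))"

primrec sa_law ::
  "nat \<Rightarrow> (nat \<Rightarrow> nat) \<Rightarrow> (nat \<times> nat \<Rightarrow> 'x) pmf
   \<Rightarrow> (nat \<Rightarrow> nat \<Rightarrow> 'x \<Rightarrow> ('x \<times> nat \<Rightarrow> real) \<Rightarrow> 'u pmf)
   \<Rightarrow> (nat \<Rightarrow> 'x \<Rightarrow> 'u \<Rightarrow> ('x \<times> nat \<Rightarrow> real) \<Rightarrow> ('u \<times> nat \<Rightarrow> real) \<Rightarrow> 'x pmf)
   \<Rightarrow> nat \<Rightarrow> ((nat \<times> nat \<Rightarrow> 'x) \<times> (nat \<times> nat \<Rightarrow> 'u)) pmf" where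
  "sa_law K N init pol P 0 =
     bind_pmf init (\<lambda>s. map_pmf (Pair s) (act_kernel K N pol 0 s))"
| "sa_law K N init pol P (Suc t) =
     bind_pmf (sa_law K N init pol P t)
       (\<lambda>(s,a). bind_pmf (next_kernel K N P s a)
          (\<lambda>s'. map_pmf (Pair s') (act_kernel K N pol (Suc t) s')))"

definition L1_UK :: "nat \<Rightarrow> ('u::finite \<times> nat \<Rightarrow> real) \<Rightarrow> ('u \<times> nat \<Rightarrow> real) \<Rightarrow> real" where
  "L1_UK K f g = (\<Sum>(u,k)\<in>UNIV \<times> {1..K}. \<bar>f (u,k) - g (u,k)\<bar>)"

end

theory Submission
  imports Defs
begin


lemma fin_set_Pi_pmf:
  assumes "finite A"
  shows "finite (set_pmf (Pi_pmf A d (p :: 'i \<Rightarrow> 'a::finite pmf)))"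
proof -
  have "set_pmf (Pi_pmf A d p) \<subseteq> {f. \<forall>x. x \<notin> A \<longrightarrow> f x = d}"
    using set_Pi_pmf_subset[OF assms] .
  moreover have "finite {f::'i\<Rightarrow>'a. \<forall>x. x \<notin> A \<longrightarrow> f x = d}"
  proof -
    have "{f::'i\<Rightarrow>'a. \<forall>x. x \<notin> A \<longrightarrow> f x = d} = PiE_dflt A d (\<lambda>_. UNIV)"
      by (auto simp: PiE_dflt_def)
    thus ?thesis using assms by auto
  qed
  ultimately show ?thesis by (rule finite_subset)
qed

lemma sq_sum_Pi_pmf:
  fixes Z :: "'i \<Rightarrow> 'a::finite \<Rightarrow> real"
  assumes A: "finite A" and I: "I \<subseteq> A"
    and zero: "\<And>x. x \<in> A \<Longrightarrow> measure_pmf.expectation (p x) (Z x) = 0"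
  shows "measure_pmf.expectation (Pi_pmf A d p) (\<lambda>f. (\<Sum>x\<in>I. Z x (f x))^2)
       = (\<Sum>x\<in>I. measure_pmf.expectation (p x) (\<lambda>v. (Z x v)^2))"
proof -
  let ?M = "Pi_pmf A d p"
  have intg: "integrable (measure_pmf ?M) g" for g :: "_ \<Rightarrow> real"
    by (rule integrable_measure_pmf_finite[OF fin_set_Pi_pmf[OF A]])
  have comp: "measure_pmf.expectation ?M (\<lambda>f. g (f x)) = measure_pmf.expectation (p x) g"
    if "x \<in> A" for x and g :: "'a \<Rightarrow> real"
  proof -
    have "measure_pmf.expectation ?M (\<lambda>f. g (f x)) = measure_pmf.expectation (map_pmf (\<lambda>f. f x) ?M) g"
      by simp
    also have "map_pmf (\<lambda>f. f x) ?M = p x" using Pi_pmf_component[OF A, of x d p] that by simp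
    finally show ?thesis .
  qed
  have ind0: "prob_space.indep_vars (measure_pmf ?M) (\<lambda>_. count_space UNIV) (\<lambda>x f. f x) A"
    by (rule indep_vars_Pi_pmf[OF A])
  have ind: "prob_space.indep_vars (measure_pmf ?M) (\<lambda>_. borel) (\<lambda>x f. Z x (f x)) A"
    by (rule prob_space.indep_vars_compose2[OF measure_pmf.prob_space_axioms ind0]) auto
  from I show ?thesis
  proof (induction I rule: infinite_finite_induct)
    case (infinite I)
    then show ?case using A finite_subset by blast
  next
    case empty
    then show ?case by simp
  next
    case (insert i I)
    have iA: "i \<in> A" and IA: "I \<subseteq> A" using insert by auto
    have indi: "prob_space.indep_var (measure_pmf ?M) borel (\<lambda>f. Z i (f i)) borel (\<lambda>f. \<Sum>x\<in>I. Z x (f x))"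
      by (rule prob_space.indep_vars_sum[OF measure_pmf.prob_space_axioms insert(1,2)])
         (rule prob_space.indep_vars_subset[OF measure_pmf.prob_space_axioms ind], use insert in auto)
    have cross: "measure_pmf.expectation ?M (\<lambda>f. Z i (f i) * (\<Sum>x\<in>I. Z x (f x))) = 0"
      using prob_space.indep_var_lebesgue_integral[OF measure_pmf.prob_space_axioms indi intg intg] comp[OF iA, of "Z i"] zero[OF iA]
      by simp
    have "(\<lambda>f. (\<Sum>x\<in>insert i I. Z x (f x))^2) =
          (\<lambda>f. (Z i (f i))^2 + 2 * (Z i (f i) * (\<Sum>x\<in>I. Z x (f x))) + (\<Sum>x\<in>I. Z x (f x))^2)"
      using insert by (simp add: power2_eq_square algebra_simps)
    hence "measure_pmf.expectation ?M (\<lambda>f. (\<Sum>x\<in>insert i I. Z x (f x))^2) =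
       measure_pmf.expectation ?M (\<lambda>f. (Z i (f i))^2) + 2 * measure_pmf.expectation ?M (\<lambda>f. Z i (f i) * (\<Sum>x\<in>I. Z x (f x)))
       + measure_pmf.expectation ?M (\<lambda>f. (\<Sum>x\<in>I. Z x (f x))^2)"
      by (simp add: intg)
    also have "\<dots> = measure_pmf.expectation (p i) (\<lambda>v. (Z i v)^2) + (\<Sum>x\<in>I. measure_pmf.expectation (p x) (\<lambda>v. (Z x v)^2))"
      using cross comp[OF iA, of "\<lambda>v. (Z i v)^2"] insert IA by simp
    finally show ?case using insert by simp
  qed
qed



lemma agents_eq: "agents K N = (\<lambda>(k,j). (j,k)) ` (SIGMA k:{1..K}. {1..N k})"
  unfolding agents_def by force

lemma finite_agents: "finite (agents K N)"
  unfolding agents_eq by auto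

lemma nu_MF_eq:
  fixes s :: "nat \<times> nat \<Rightarrow> 'x::finite"
  shows "nu_MF (emp_state K N s) rho (u,k) =
     (\<Sum>j\<in>{1..N k}. pmf (rho k (s (j,k)) (emp_state K N s)) u) / real (Npop K N)"
proof -
  let ?mu = "emp_state K N s"
  have "nu_MF ?mu rho (u,k) = (\<Sum>x\<in>UNIV. pmf (rho k x ?mu) u * (\<Sum>j\<in>{1..N k}. if s (j,k) = x then 1 else 0)) / real (Npop K N)"
  proof -
    have e: "?mu (x,k) = (\<Sum>j\<in>{1..N k}. if s (j,k) = x then 1 else 0) / real (Npop K N)" for x
      by (simp add: emp_state_def)
    show ?thesis unfolding nu_MF_def by (simp only: e prod.case times_divide_eq_right flip: sum_divide_distrib)
  qed
  also have "(\<Sum>x\<in>UNIV. pmf (rho k x ?mu) u * (\<Sum>j\<in>{1..N k}. if s (j,k) = x then 1 else 0))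
     = (\<Sum>j\<in>{1..N k}. \<Sum>x\<in>UNIV. if s (j,k) = x then pmf (rho k x ?mu) u else 0)"
    apply (simp add: sum_distrib_left if_distrib cong: if_cong)
    apply (subst sum.swap)
    apply simp
    done
  also have "\<dots> = (\<Sum>j\<in>{1..N k}. pmf (rho k (s (j,k)) ?mu) u)"
    by simp
  finally show ?thesis .
qed

lemma sqrt_ineq:
  fixes Y :: real assumes "c > 0"
  shows "\<bar>Y\<bar> \<le> (Y^2 / c + c) / 2"
proof -
  have "0 \<le> (\<bar>Y\<bar> - c)^2" by simp
  hence "2 * c * \<bar>Y\<bar> \<le> Y^2 + c^2" by (simp add: power2_eq_square algebra_simps)
  thus ?thesis using assms by (simp add: field_simps power2_eq_square)
qed



lemma per_k_bound:
  fixes M :: "(nat \<times> nat \<Rightarrow> 'u::finite) pmf" and q :: "nat \<times> nat \<Rightarrow> 'u pmf"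
  assumes A: "finite A" and B: "B \<subseteq> A" and M: "M = Pi_pmf A d q"
    and cardB: "card B = m" and m: "m \<ge> 1"
  shows "(\<Sum>u\<in>UNIV. measure_pmf.expectation M
            (\<lambda>a. \<bar>\<Sum>x\<in>B. indicator {u} (a x) - pmf (q x) u\<bar>))
         \<le> sqrt (real m) * sqrt (real CARD('u))"
proof -
  let ?C = "real CARD('u)"
  define c where "c = sqrt (real m) / sqrt ?C"
  have Cpos: "?C > 0" by simp
  have c: "c > 0" using m unfolding c_def by simp
  have intg: "integrable (measure_pmf M) g" for g :: "_ \<Rightarrow> real"
    unfolding M by (rule integrable_measure_pmf_finite[OF fin_set_Pi_pmf[OF A]])
  have intq: "integrable (measure_pmf (q x)) g" for x and g :: "'u \<Rightarrow> real"
    by (rule integrable_measure_pmf_finite) simp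
  have zero: "measure_pmf.expectation (q x) (\<lambda>v. indicator {u} v - pmf (q x) u) = 0" for x u
    by (simp add: measure_pmf_single intq)
  have var: "measure_pmf.expectation (q x) (\<lambda>v. (indicator {u} v - pmf (q x) u)^2) \<le> pmf (q x) u" for x u
  proof -
    let ?r = "pmf (q x) u"
    have "(\<lambda>v. (indicator {u} v - ?r)^2) = (\<lambda>v. (1 - 2 * ?r) * indicator {u} v + ?r^2)"
      by (auto simp: indicator_def power2_eq_square algebra_simps)
    hence "measure_pmf.expectation (q x) (\<lambda>v. (indicator {u} v - ?r)^2) = (1 - 2 * ?r) * ?r + ?r^2"
      by (simp add: measure_pmf_single intq)
    also have "\<dots> \<le> ?r" by (simp add: power2_eq_square algebra_simps)
    finally show ?thesis .
  qed
  have sq: "measure_pmf.expectation M (\<lambda>a. (\<Sum>x\<in>B. indicator {u} (a x) - pmf (q x) u)^2)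
      \<le> (\<Sum>x\<in>B. pmf (q x) u)" for u
  proof -
    have "measure_pmf.expectation M (\<lambda>a. (\<Sum>x\<in>B. indicator {u} (a x) - pmf (q x) u)^2)
       = (\<Sum>x\<in>B. measure_pmf.expectation (q x) (\<lambda>v. (indicator {u} v - pmf (q x) u)^2))"
      unfolding M
      by (rule sq_sum_Pi_pmf[OF A B, where Z = "\<lambda>x v. indicator {u} v - pmf (q x) u"]) (rule zero)
    also have "\<dots> \<le> (\<Sum>x\<in>B. pmf (q x) u)" by (rule sum_mono) (rule var)
    finally show ?thesis .
  qed
  have each: "measure_pmf.expectation M (\<lambda>a. \<bar>\<Sum>x\<in>B. indicator {u} (a x) - pmf (q x) u\<bar>)
     \<le> ((\<Sum>x\<in>B. pmf (q x) u) / c + c) / 2" for u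
  proof -
    have "measure_pmf.expectation M (\<lambda>a. \<bar>\<Sum>x\<in>B. indicator {u} (a x) - pmf (q x) u\<bar>)
       \<le> measure_pmf.expectation M (\<lambda>a. ((\<Sum>x\<in>B. indicator {u} (a x) - pmf (q x) u)^2 / c + c) / 2)"
      by (rule integral_mono[OF intg intg]) (rule sqrt_ineq[OF c])
    also have "\<dots> = (measure_pmf.expectation M (\<lambda>a. (\<Sum>x\<in>B. indicator {u} (a x) - pmf (q x) u)^2) / c + c) / 2"
      by (simp add: intg)
    also have "\<dots> \<le> ((\<Sum>x\<in>B. pmf (q x) u) / c + c) / 2"
      using sq[of u] c by (simp add: divide_right_mono)
    finally show ?thesis .
  qed
  have "(\<Sum>u\<in>UNIV. measure_pmf.expectation M (\<lambda>a. \<bar>\<Sum>x\<in>B. indicator {u} (a x) - pmf (q x) u\<bar>))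
     \<le> (\<Sum>u\<in>UNIV. ((\<Sum>x\<in>B. pmf (q x) u) / c + c) / 2)"
    by (rule sum_mono) (rule each)
  also have "\<dots> = ((\<Sum>x\<in>B. \<Sum>u\<in>UNIV. pmf (q x) u) / c + ?C * c) / 2"
    by (simp add: sum.distrib sum_divide_distrib[symmetric] sum.swap[of _ B] add_divide_distrib)
  also have "(\<Sum>x\<in>B. \<Sum>u\<in>UNIV. pmf (q x) u) = real m"
    using cardB by (simp add: sum_pmf_eq_1)
  also have "(real m / c + ?C * c) / 2 = sqrt (real m) * sqrt ?C"
  proof -
    have sm: "sqrt (real m) > 0" using m by simp
    have sC: "sqrt ?C > 0" by simp
    have "real m = sqrt (real m) * sqrt (real m)" by simp
    moreover have "?C = sqrt ?C * sqrt ?C" by simp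
    ultimately have "real m / c = sqrt (real m) * sqrt ?C" "?C * c = sqrt (real m) * sqrt ?C"
      unfolding c_def using sm sC by (metis (no_types, lifting) divide_divide_eq_right nonzero_mult_div_cancel_left order_less_irrefl times_divide_eq_right)+
    thus ?thesis by simp
  qed
  finally show ?thesis .
qed



lemma per_s_bound:
  fixes K :: nat and N :: "nat \<Rightarrow> nat"
    and pol :: "nat \<Rightarrow> nat \<Rightarrow> 'x::finite \<Rightarrow> ('x \<times> nat \<Rightarrow> real) \<Rightarrow> 'u::finite pmf"
    and s :: "nat \<times> nat \<Rightarrow> 'x"
  assumes "K \<ge> 1"
    and Nk: "\<And>k. k \<in> {1..K} \<Longrightarrow> N k \<ge> 1"
  shows "measure_pmf.expectation (act_kernel K N pol t s)
           (\<lambda>a. L1_UK K (emp_action K N a) (nu_MF (emp_state K N s) (pol t)))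
         \<le> (\<Sum>k\<in>{1..K}. sqrt (real (N k))) * sqrt (real CARD('u)) / real (Npop K N)"
proof -
  let ?n = "real (Npop K N)"
  let ?mu = "emp_state K N s"
  define q where "q = (\<lambda>(j,k). pol t k (s (j,k)) ?mu)"
  define A where "A = agents K N"
  define B where "B = (\<lambda>k. (\<lambda>j. (j,k)) ` {1..N k})"
  define M where "M = act_kernel K N pol t s"
  have MA: "M = Pi_pmf A undefined q" unfolding M_def act_kernel_def A_def q_def by simp
  have A: "finite A" unfolding A_def by (rule finite_agents)
  have BA: "B k \<subseteq> A" if "k \<in> {1..K}" for k using that unfolding B_def A_def agents_def by auto
  have cardB: "card (B k) = N k" for k
    unfolding B_def by (subst card_image) (auto simp: inj_on_def)
  define Y where "Y = (\<lambda>k u a. \<bar>\<Sum>x\<in>B k. indicator {u} (a x) - pmf (q x) u\<bar>)"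
  have L1: "L1_UK K (emp_action K N a) (nu_MF ?mu (pol t)) =
        (\<Sum>k\<in>{1..K}. \<Sum>u\<in>UNIV. Y k u a) / ?n" for a
  proof -
    have d: "emp_action K N a (u,k) - nu_MF ?mu (pol t) (u,k) = (\<Sum>x\<in>B k. indicator {u} (a x) - pmf (q x) u) / ?n" for u k
    proof -
      have "(\<Sum>x\<in>B k. indicator {u} (a x) - pmf (q x) u) = (\<Sum>j\<in>{1..N k}. indicator {u} (a (j,k)) - pmf (q (j,k)) u)"
        unfolding B_def by (subst sum.reindex) (auto simp: inj_on_def)
      also have "\<dots> = (\<Sum>j\<in>{1..N k}. if a (j,k) = u then 1 else 0) - (\<Sum>j\<in>{1..N k}. pmf (pol t k (s (j,k)) ?mu) u)"
        by (simp only: sum_subtractf[symmetric]) (rule sum.cong, simp_all add: q_def indicator_def)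
      finally show ?thesis
        by (simp add: nu_MF_eq emp_action_def diff_divide_distrib)
    qed
    have "L1_UK K (emp_action K N a) (nu_MF ?mu (pol t)) = (\<Sum>(u,k)\<in>UNIV \<times> {1..K}. Y k u a / ?n)"
      unfolding L1_UK_def Y_def by (intro sum.cong refl) (auto simp: d)
    also have "\<dots> = (\<Sum>u\<in>UNIV. \<Sum>k\<in>{1..K}. Y k u a / ?n)"
      by (simp add: sum.cartesian_product)
    also have "\<dots> = (\<Sum>k\<in>{1..K}. \<Sum>u\<in>UNIV. Y k u a) / ?n"
      by (subst sum.swap) (simp add: sum_divide_distrib)
    finally show ?thesis .
  qed
  have intg: "integrable (measure_pmf M) g" for g :: "_ \<Rightarrow> real"
    unfolding MA by (rule integrable_measure_pmf_finite[OF fin_set_Pi_pmf[OF A]])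
  have "measure_pmf.expectation M (\<lambda>a. L1_UK K (emp_action K N a) (nu_MF ?mu (pol t)))
      = (\<Sum>k\<in>{1..K}. \<Sum>u\<in>UNIV. measure_pmf.expectation M (Y k u)) / ?n"
    by (simp add: L1 intg)
  also have "\<dots> \<le> (\<Sum>k\<in>{1..K}. sqrt (real (N k)) * sqrt (real CARD('u))) / ?n"
  proof (rule divide_right_mono[OF sum_mono])
    fix k assume k: "k \<in> {1..K}"
    show "(\<Sum>u\<in>UNIV. measure_pmf.expectation M (Y k u)) \<le> sqrt (real (N k)) * sqrt (real CARD('u))"
      unfolding Y_def by (rule per_k_bound[OF A BA[OF k] MA cardB Nk[OF k]])
  qed simp
  finally show ?thesis unfolding M_def by (simp add: sum_distrib_right)
qed



lemma bind_bound:
  fixes g :: "'a \<times> 'b \<Rightarrow> real" and c :: real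
  assumes nn: "\<And>y. g y \<ge> 0" and c: "c \<ge> 0"
    and intM: "\<And>s. integrable (measure_pmf (M s)) (\<lambda>a. g (s,a))"
    and bd: "\<And>s. measure_pmf.expectation (M s) (\<lambda>a. g (s,a)) \<le> c"
  shows "measure_pmf.expectation (bind_pmf Q (\<lambda>s. map_pmf (Pair s) (M s))) g \<le> c"
proof -
  have "(\<integral>\<^sup>+ y. ennreal (g y) \<partial>measure_pmf (bind_pmf Q (\<lambda>s. map_pmf (Pair s) (M s))))
      = (\<integral>\<^sup>+ s. \<integral>\<^sup>+ a. ennreal (g (s,a)) \<partial>M s \<partial>Q)"
    by simp
  also have "\<dots> \<le> (\<integral>\<^sup>+ s. ennreal c \<partial>Q)"
  proof (rule nn_integral_mono)
    fix s
    have "(\<integral>\<^sup>+ a. ennreal (g (s,a)) \<partial>M s) = ennreal (measure_pmf.expectation (M s) (\<lambda>a. g (s,a)))"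
      by (rule nn_integral_eq_integral[OF intM]) (simp add: nn)
    also have "\<dots> \<le> ennreal c" using bd[of s] by (rule ennreal_leI)
    finally show "(\<integral>\<^sup>+ a. ennreal (g (s,a)) \<partial>M s) \<le> ennreal c" .
  qed
  also have "\<dots> = ennreal c" by simp
  finally have le: "(\<integral>\<^sup>+ y. ennreal (g y) \<partial>measure_pmf (bind_pmf Q (\<lambda>s. map_pmf (Pair s) (M s)))) \<le> ennreal c" .
  show ?thesis
    by (subst integral_eq_nn_integral) (auto simp: nn simp del: nn_integral_bind_pmf intro!: enn2real_leI[OF c le])
qed

lemma sa_law_form:
  "\<exists>Q. sa_law K N init pol P t = bind_pmf Q (\<lambda>s. map_pmf (Pair s) (act_kernel K N pol t s))"
proof (cases t)
  case 0
  then show ?thesis by auto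
next
  case (Suc t')
  have "sa_law K N init pol P t =
     bind_pmf (bind_pmf (sa_law K N init pol P t') (\<lambda>(s,a). next_kernel K N P s a))
       (\<lambda>s'. map_pmf (Pair s') (act_kernel K N pol t s'))"
    unfolding Suc by (simp add: bind_assoc_pmf case_prod_beta')
  thus ?thesis by blast
qed

theorem lemma6:
  fixes K :: nat and N :: "nat \<Rightarrow> nat"
    and init :: "(nat \<times> nat \<Rightarrow> 'x::finite) pmf"
    and pol :: "nat \<Rightarrow> nat \<Rightarrow> 'x \<Rightarrow> ('x \<times> nat \<Rightarrow> real) \<Rightarrow> 'u::finite pmf"
    and P :: "nat \<Rightarrow> 'x \<Rightarrow> 'u \<Rightarrow> ('x \<times> nat \<Rightarrow> real) \<Rightarrow> ('u \<times> nat \<Rightarrow> real) \<Rightarrow> 'x pmf"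
    and t :: nat
  assumes "K \<ge> 1"
    and "\<And>k. k \<in> {1..K} \<Longrightarrow> N k \<ge> 1"
  shows "measure_pmf.expectation (sa_law K N init pol P t)
           (\<lambda>(s,a). L1_UK K (emp_action K N a) (nu_MF (emp_state K N s) (pol t)))
         \<le> (\<Sum>k\<in>{1..K}. sqrt (real (N k))) * sqrt (real CARD('u)) / real (Npop K N)"
proof -
  obtain Q where Q: "sa_law K N init pol P t = bind_pmf Q (\<lambda>s. map_pmf (Pair s) (act_kernel K N pol t s))"
    using sa_law_form by blast
  show ?thesis
    unfolding Q
  proof (rule bind_bound)
    show "\<And>y. 0 \<le> (case y of (s, a) \<Rightarrow> L1_UK K (emp_action K N a) (nu_MF (emp_state K N s) (pol t)))"
      by (auto simp: L1_UK_def intro!: sum_nonneg)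
    show "0 \<le> (\<Sum>k\<in>{1..K}. sqrt (real (N k))) * sqrt (real CARD('u)) / real (Npop K N)"
      by (intro divide_nonneg_nonneg mult_nonneg_nonneg sum_nonneg) auto
    show "integrable (measure_pmf (act_kernel K N pol t s)) (\<lambda>a. case (s, a) of (s, a) \<Rightarrow> L1_UK K (emp_action K N a) (nu_MF (emp_state K N s) (pol t)))" for s
      unfolding act_kernel_def by (rule integrable_measure_pmf_finite[OF fin_set_Pi_pmf[OF finite_agents]])
    show "measure_pmf.expectation (act_kernel K N pol t s) (\<lambda>a. case (s, a) of (s, a) \<Rightarrow> L1_UK K (emp_action K N a) (nu_MF (emp_state K N s) (pol t)))
         \<le> (\<Sum>k\<in>{1..K}. sqrt (real (N k))) * sqrt (real CARD('u)) / real (Npop K N)" for s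
      using per_s_bound[OF assms] by simp
  qed
qed

end
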